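(* Let $\mathcal{C}$ be a fibre-symmetric coherent configuration with two fibres that admits matrices $E^{ij}_r$ satisfying (B1)–(B4). Suppose $\mathcal{C}$ has type $\begin{pmatrix}t+1&t\\&t+1\end{pmatrix}$ for some positive integer $t$, i.e. $t_{11}=t_{22}=t_{12}=t$. Then, setting $\beta$, $\gamma$ to be the two fibres, $X_i=A^{11}_i$ ($0\le i\le t$), $Y_i=A^{22}_i$ ($0\le i\le t$) and $N_h=A^{12}_h$ ($1\le h\le t$), $\mathcal{C}$ is a bipartite coherent configuration.
   Context: Coherent configuration with $f$ fibres: positive integers $x_i$, $t_{ij}$ ($1\le i,j\le f$), $\epsilon_{ij}=1-\delta_{ij}$, $x_i\times x_j$ $0/1$-matrices $A^{ij}_r$ ($\epsilon_{ij}\le r\le t_{ij}$), and $\hat A^{ij}_r$ the $f\times f$ block matrix whose only nonzero block is the $(i,j)$ block equal to $A^{ij}_r$; $\mathcal{C}=\{\hat A^{ij}_r\}$ satisfies $A^{ii}_0=I_{x_i}$, $\sum_{r=\epsilon_{ij}}^{t_{ij}}A^{ij}_r=J_{x_i,x_j}$, closure under transpose, and $\hat A^{ij}_r\hat A^{jh}_s\in\mathrm{Span}(\mathcal{C})$. Fibre-symmetric: $(A^{ii}_r)^T=A^{ii}_r$ for all $i$ and $0\le r\le t_{ii}$. The type of a two-fibre configuration is the symmetric matrix recording the number of matrices in each block: $t_{11}+1$, $t_{12}$, $t_{22}+1$. With $\tilde t_{ij}=t_{ij}-\epsilon_{ij}$, conditions on $x_i\times x_j$ matrices $E^{ij}_r$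 ($0\le r\le\tilde t_{ij}$): (B1) $E^{ij}_0=\frac{1}{\sqrt{x_ix_j}}J_{x_i,x_j}$; (B2) $\{E^{ij}_r\}_r$ is a basis of $\mathrm{Span}\{A^{ij}_r\}_r$; (B3) $(E^{ij}_r)^T=E^{ji}_r$; (B4) $E^{ij}_rE^{j'h}_s=\delta_{j,j'}\delta_{r,s}E^{ih}_r$. Bipartite coherent configuration: finite sets $\beta,\gamma$, positive integers $t_\beta,t_\gamma,t_{\beta\gamma}$, $0/1$-matrices $X_0,\dots,X_{t_\beta}$ ($|\beta|\times|\beta|$), $Y_0,\dots,Y_{t_\gamma}$ ($|\gamma|\times|\gamma|$), $N_1,\dots,N_{t_{\beta\gamma}}$ ($|\beta|\times|\gamma|$); $\mathcal{C}$ is the set of block matrices $\begin{pmatrix}X_i&0\\0&0\end{pmatrix}$, $\begin{pmatrix}0&0\\0&Y_j\end{pmatrix}$, $\begin{pmatrix}0&N_h\\0&0\end{pmatrix}$, $\begin{pmatrix}0&0\\N_h^T&0\end{pmatrix}$, satisfying: (C1) $X_0=I$, $Y_0=I$; (C2) the elements of $\mathcal{C}$ sum to $J$; (C3) closure under transpose; (C4) $M_1M_2\in\mathrm{Span}(\mathcal{C})$ for $M_1,M_2\in\mathcal{C}$; (C5) $N_iN_j^T=N_jN_i^T$ and $N_i^TN_j=N_j^TN_i$ for all $i,j$; (C6) $\{N_iN_j^T\}\cup\{I\}$ spans $\mathrm{Span}\{X_i\}$ and $\{N_i^TN_j\}\cup\{I\}$ spans $\mathrm{Span}\{Y_i\}$.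 *)

theory Defs
  imports "Jordan_Normal_Form.Matrix"
begin

definition J_mat :: "nat \<Rightarrow> nat \<Rightarrow> real mat" where
  "J_mat n m = mat n m (\<lambda>_. 1)"

definition zero_one_mat :: "real mat \<Rightarrow> bool" where
  "zero_one_mat M \<longleftrightarrow> (\<forall>a < dim_row M. \<forall>b < dim_col M. M $$ (a,b) = 0 \<or> M $$ (a,b) = 1)"

definition mat_span :: "nat \<Rightarrow> nat \<Rightarrow> real mat set \<Rightarrow> real mat set" where
  "mat_span n m S = {M \<in> carrier_mat n m. \<exists>c :: real mat \<Rightarrow> real.
      \<forall>a < n. \<forall>b < m. M $$ (a,b) = (\<Sum>K\<in>S. c K * K $$ (a,b))}"

definition lin_indep_family :: "nat \<Rightarrow> nat \<Rightarrow> 'i set \<Rightarrow> ('i \<Rightarrow> real mat) \<Rightarrow> bool" where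
  "lin_indep_family n m I F \<longleftrightarrow> finite I \<and> (\<forall>c :: 'i \<Rightarrow> real.
      (\<forall>a < n. \<forall>b < m. (\<Sum>k\<in>I. c k * F k $$ (a,b)) = 0) \<longrightarrow> (\<forall>k\<in>I. c k = 0))"

definition eps :: "nat \<Rightarrow> nat \<Rightarrow> nat" where
  "eps i j = (if i = j then 0 else 1)"

definition fib_off :: "(nat \<Rightarrow> nat) \<Rightarrow> nat \<Rightarrow> nat" where
  "fib_off x i = (\<Sum>k\<in>{1..<i}. x k)"

definition hat_mat :: "nat \<Rightarrow> (nat \<Rightarrow> nat) \<Rightarrow> nat \<Rightarrow> nat \<Rightarrow> real mat \<Rightarrow> real mat" where
  "hat_mat f x i j M = mat (fib_off x (f+1)) (fib_off x (f+1)) (\<lambda>(a,b).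
      if fib_off x i \<le> a \<and> a < fib_off x (i+1) \<and> fib_off x j \<le> b \<and> b < fib_off x (j+1)
      then M $$ (a - fib_off x i, b - fib_off x j) else 0)"

definition cc_set :: "nat \<Rightarrow> (nat \<Rightarrow> nat) \<Rightarrow> (nat \<Rightarrow> nat \<Rightarrow> nat)
     \<Rightarrow> (nat \<Rightarrow> nat \<Rightarrow> nat \<Rightarrow> real mat) \<Rightarrow> real mat set" where
  "cc_set f x t A = {hat_mat f x i j (A i j r) | i j r.
      i \<in> {1..f} \<and> j \<in> {1..f} \<and> eps i j \<le> r \<and> r \<le> t i j}"

definition coherent_config :: "nat \<Rightarrow> (nat \<Rightarrow> nat) \<Rightarrow> (nat \<Rightarrow> nat \<Rightarrow> nat)
     \<Rightarrow> (nat \<Rightarrow> nat \<Rightarrow> nat \<Rightarrow> real mat) \<Rightarrow> bool" where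
  "coherent_config f x t A \<longleftrightarrow>
     (\<forall>i\<in>{1..f}. x i > 0) \<and>
     (\<forall>i\<in>{1..f}. \<forall>j\<in>{1..f}. t i j > 0) \<and>
     (\<forall>i\<in>{1..f}. \<forall>j\<in>{1..f}. \<forall>r\<in>{eps i j..t i j}.
         A i j r \<in> carrier_mat (x i) (x j) \<and> zero_one_mat (A i j r)) \<and>
     (\<forall>i\<in>{1..f}. A i i 0 = 1\<^sub>m (x i)) \<and>
     (\<forall>i\<in>{1..f}. \<forall>j\<in>{1..f}. \<forall>a < x i. \<forall>b < x j.
         (\<Sum>r\<in>{eps i j..t i j}. A i j r $$ (a,b)) = 1) \<and>
     (\<forall>M\<in>cc_set f x t A. transpose_mat M \<in> cc_set f x t A) \<and>
     (\<forall>i\<in>{1..f}. \<forall>j\<in>{1..f}. \<forall>h\<in>{1..f}. \<forall>r\<in>{eps i j..t i j}. \<forall>s\<in>{eps j h..t j h}.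
         hat_mat f x i j (A i j r) * hat_mat f x j h (A j h s)
           \<in> mat_span (fib_off x (f+1)) (fib_off x (f+1)) (cc_set f x t A))"

definition fibre_symmetric :: "nat \<Rightarrow> (nat \<Rightarrow> nat \<Rightarrow> nat) \<Rightarrow> (nat \<Rightarrow> nat \<Rightarrow> nat \<Rightarrow> real mat) \<Rightarrow> bool" where
  "fibre_symmetric f t A \<longleftrightarrow> (\<forall>i\<in>{1..f}. \<forall>r\<in>{0..t i i}. transpose_mat (A i i r) = A i i r)"

text \<open>Conditions (B1)-(B4), with tilde t_ij = t_ij - eps_ij.  (B4) is stated for j = j';
  for j ~= j' the product of the corresponding block matrices is automatically zero.\<close>
definition admits_E :: "nat \<Rightarrow> (nat \<Rightarrow> nat) \<Rightarrow> (nat \<Rightarrow> nat \<Rightarrow> nat)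
     \<Rightarrow> (nat \<Rightarrow> nat \<Rightarrow> nat \<Rightarrow> real mat) \<Rightarrow> bool" where
  "admits_E f x t A \<longleftrightarrow> (\<exists>E :: nat \<Rightarrow> nat \<Rightarrow> nat \<Rightarrow> real mat.
     (\<forall>i\<in>{1..f}. \<forall>j\<in>{1..f}.
        E i j 0 = (1 / sqrt (real (x i * x j))) \<cdot>\<^sub>m J_mat (x i) (x j)) \<and>
     (\<forall>i\<in>{1..f}. \<forall>j\<in>{1..f}.
        (\<forall>r\<in>{0..t i j - eps i j}. E i j r \<in> carrier_mat (x i) (x j)) \<and>
        lin_indep_family (x i) (x j) {0..t i j - eps i j} (E i j) \<and>
        mat_span (x i) (x j) (E i j ` {0..t i j - eps i j})
          = mat_span (x i) (x j) (A i j ` {eps i j..t i j})) \<and>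
     (\<forall>i\<in>{1..f}. \<forall>j\<in>{1..f}. \<forall>r\<in>{0..t i j - eps i j}. transpose_mat (E i j r) = E j i r) \<and>
     (\<forall>i\<in>{1..f}. \<forall>j\<in>{1..f}. \<forall>h\<in>{1..f}.
        \<forall>r\<in>{0..t i j - eps i j}. \<forall>s\<in>{0..t j h - eps j h}.
          E i j r * E j h s = (if r = s then E i h r else 0\<^sub>m (x i) (x h))))"

text \<open>Type of a two-fibre configuration: the symmetric matrix (t11+1, t12; t12, t22+1);
  symmetry records t21 = t12.\<close>
definition has_type2 :: "(nat \<Rightarrow> nat \<Rightarrow> nat) \<Rightarrow> nat \<Rightarrow> nat \<Rightarrow> nat \<Rightarrow> bool" where
  "has_type2 t a b c \<longleftrightarrow> t 1 1 + 1 = a \<and> t 1 2 = b \<and> t 2 1 = b \<and> t 2 2 + 1 = c"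

definition bip_set :: "nat \<Rightarrow> nat \<Rightarrow> nat \<Rightarrow> nat \<Rightarrow> nat
    \<Rightarrow> (nat \<Rightarrow> real mat) \<Rightarrow> (nat \<Rightarrow> real mat) \<Rightarrow> (nat \<Rightarrow> real mat) \<Rightarrow> real mat set" where
  "bip_set nb ng tb tg tbg X Y N =
     {four_block_mat (X i) (0\<^sub>m nb ng) (0\<^sub>m ng nb) (0\<^sub>m ng ng) | i. i \<le> tb}
   \<union> {four_block_mat (0\<^sub>m nb nb) (0\<^sub>m nb ng) (0\<^sub>m ng nb) (Y j) | j. j \<le> tg}
   \<union> {four_block_mat (0\<^sub>m nb nb) (N h) (0\<^sub>m ng nb) (0\<^sub>m ng ng) | h. h \<in> {1..tbg}}
   \<union> {four_block_mat (0\<^sub>m nb nb) (0\<^sub>m nb ng) (transpose_mat (N h)) (0\<^sub>m ng ng) | h. h \<in> {1..tbg}}"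

text \<open>nb = |beta|, ng = |gamma|.\<close>
definition bipartite_cc :: "nat \<Rightarrow> nat \<Rightarrow> nat \<Rightarrow> nat \<Rightarrow> nat
    \<Rightarrow> (nat \<Rightarrow> real mat) \<Rightarrow> (nat \<Rightarrow> real mat) \<Rightarrow> (nat \<Rightarrow> real mat) \<Rightarrow> bool" where
  "bipartite_cc nb ng tb tg tbg X Y N \<longleftrightarrow>
     (let C = bip_set nb ng tb tg tbg X Y N in
     tb > 0 \<and> tg > 0 \<and> tbg > 0 \<and>
     (\<forall>i \<le> tb. X i \<in> carrier_mat nb nb \<and> zero_one_mat (X i)) \<and>
     (\<forall>j \<le> tg. Y j \<in> carrier_mat ng ng \<and> zero_one_mat (Y j)) \<and>
     (\<forall>h\<in>{1..tbg}. N h \<in> carrier_mat nb ng \<and> zero_one_mat (N h)) \<and>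
     \<comment> \<open>(C1)\<close>
     X 0 = 1\<^sub>m nb \<and> Y 0 = 1\<^sub>m ng \<and>
     \<comment> \<open>(C2)\<close>
     (\<forall>a < nb + ng. \<forall>b < nb + ng. (\<Sum>M\<in>C. M $$ (a,b)) = 1) \<and>
     \<comment> \<open>(C3)\<close>
     (\<forall>M\<in>C. transpose_mat M \<in> C) \<and>
     \<comment> \<open>(C4)\<close>
     (\<forall>M1\<in>C. \<forall>M2\<in>C. M1 * M2 \<in> mat_span (nb + ng) (nb + ng) C) \<and>
     \<comment> \<open>(C5)\<close>
     (\<forall>i\<in>{1..tbg}. \<forall>j\<in>{1..tbg}.
        N i * transpose_mat (N j) = N j * transpose_mat (N i) \<and>
        transpose_mat (N i) * N j = transpose_mat (N j) * N i) \<and>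
     \<comment> \<open>(C6)\<close>
     mat_span nb nb ({N i * transpose_mat (N j) | i j. i \<in> {1..tbg} \<and> j \<in> {1..tbg}} \<union> {1\<^sub>m nb})
       = mat_span nb nb (X ` {0..tb}) \<and>
     mat_span ng ng ({transpose_mat (N i) * N j | i j. i \<in> {1..tbg} \<and> j \<in> {1..tbg}} \<union> {1\<^sub>m ng})
       = mat_span ng ng (Y ` {0..tg}))"

end

theory Submission
  imports Defs "HOL-Library.Function_Algebras"
begin

lemma fun_sum_apply: "(sum f S) p = (\<Sum>K\<in>S. f K p)"
  by (induction S rule: infinite_finite_induct) auto

definition sc :: "real \<Rightarrow> (nat \<times> nat \<Rightarrow> real) \<Rightarrow> (nat \<times> nat \<Rightarrow> real)" where
  "sc c f = (\<lambda>p. c * f p)"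

interpretation V: vector_space sc
  by unfold_locales (auto simp: sc_def fun_eq_iff algebra_simps)

definition vc :: "nat \<Rightarrow> nat \<Rightarrow> real mat \<Rightarrow> (nat \<times> nat \<Rightarrow> real)" where
  "vc n m M = (\<lambda>(a,b). if a < n \<and> b < m then M $$ (a,b) else 0)"

lemma span_bridge:
  assumes "finite S" "M \<in> mat_span n m S"
  shows "vc n m M \<in> V.span (vc n m ` S)"
proof -
  from assms(2) obtain c where c: "\<forall>a<n. \<forall>b<m. M $$ (a,b) = (\<Sum>K\<in>S. c K * K $$ (a,b))"
    unfolding mat_span_def by auto
  have "vc n m M = (\<Sum>K\<in>S. sc (c K) (vc n m K))"
    by (auto simp: fun_eq_iff fun_sum_apply sc_def vc_def c)
  also have "\<dots> \<in> V.span (vc n m ` S)"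
    by (intro V.span_sum V.span_scale V.span_base) auto
  finally show ?thesis .
qed

lemma indep_bridge:
  assumes "lin_indep_family n m I F"
  shows "inj_on (\<lambda>i. vc n m (F i)) I \<and> V.independent ((\<lambda>i. vc n m (F i)) ` I)"
proof -
  have fin: "finite I" using assms by (simp add: lin_indep_family_def)
  have inj: "inj_on (\<lambda>i. vc n m (F i)) I"
  proof (rule inj_onI, rule ccontr)
    fix i j assume ij: "i \<in> I" "j \<in> I" "vc n m (F i) = vc n m (F j)" "i \<noteq> j"
    define c where "c = (\<lambda>k. if k = i then 1 else if k = j then -1 else (0::real))"
    have "\<forall>a<n. \<forall>b<m. (\<Sum>k\<in>I. c k * F k $$ (a,b)) = 0"
    proof (intro allI impI)
      fix a b assume ab: "a < n" "b < m"
      have e: "F i $$ (a,b) = F j $$ (a,b)" using fun_cong[OF ij(3), of "(a,b)"] ab by (simp add: vc_def)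
      have "(\<Sum>k\<in>I. c k * F k $$ (a,b)) = (\<Sum>k\<in>I. (if k = i then F i $$ (a,b) else 0) + (if k = j then - F j $$ (a,b) else 0))"
        by (rule sum.cong) (auto simp: c_def ij)
      also have "\<dots> = 0" using ij fin by (simp add: sum.distrib e)
      finally show "(\<Sum>k\<in>I. c k * F k $$ (a,b)) = 0" .
    qed
    moreover have "\<forall>c. (\<forall>a<n. \<forall>b<m. (\<Sum>k\<in>I. c k * F k $$ (a,b)) = 0) \<longrightarrow> (\<forall>k\<in>I. c k = 0)"
      using assms unfolding lin_indep_family_def by (rule conjunct2)
    ultimately have "c i = 0" using ij(1) by blast
    then show False by (simp add: c_def)
  qed
  have "V.independent ((\<lambda>i. vc n m (F i)) ` I)"
  proof (rule V.independent_if_scalars_zero)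
    show "finite ((\<lambda>i. vc n m (F i)) ` I)" using fin by simp
  next
    fix f v assume s: "(\<Sum>x\<in>(\<lambda>i. vc n m (F i)) ` I. sc (f x) x) = 0" and v: "v \<in> (\<lambda>i. vc n m (F i)) ` I"
    have s2: "(\<Sum>i\<in>I. sc (f (vc n m (F i))) (vc n m (F i))) = 0"
      using s by (simp add: sum.reindex[OF inj])
    have "\<forall>a<n. \<forall>b<m. (\<Sum>i\<in>I. f (vc n m (F i)) * F i $$ (a,b)) = 0"
    proof (intro allI impI)
      fix a b assume ab: "a < n" "b < m"
      from fun_cong[OF s2, of "(a,b)"] ab show "(\<Sum>i\<in>I. f (vc n m (F i)) * F i $$ (a,b)) = 0"
        by (simp add: fun_sum_apply sc_def vc_def)
    qed
    note h1 = this
    have h2: "\<forall>c. (\<forall>a<n. \<forall>b<m. (\<Sum>k\<in>I. c k * F k $$ (a,b)) = 0) \<longrightarrow> (\<forall>k\<in>I. c k = 0)"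
      using assms unfolding lin_indep_family_def by (rule conjunct2)
    have "\<forall>i\<in>I. f (vc n m (F i)) = 0"
      using mp[OF spec[OF h2, of "\<lambda>i. f (vc n m (F i))"] h1] .
    then show "f v = 0" using v by auto
  qed
  with inj show ?thesis by blast
qed

lemma dim_lemma:
  assumes fI: "finite I" and fJ: "finite J"
    and ind: "lin_indep_family n m I F"
    and sp: "\<forall>i\<in>I. F i \<in> mat_span n m (G ` J)"
    and cd: "card J \<le> card I" and j0: "j0 \<in> J"
    and bad: "vc n m (G j0) \<in> insert 0 (vc n m ` G ` (J - {j0}))"
  shows False
proof -
  let ?T = "vc n m ` G ` (J - {j0})"
  have sub: "vc n m ` G ` J \<subseteq> V.span ?T"
  proof
    fix v assume "v \<in> vc n m ` G ` J"
    then obtain j where j: "j \<in> J" "v = vc n m (G j)" by auto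
    show "v \<in> V.span ?T"
    proof (cases "j = j0")
      case True
      from bad have "vc n m (G j0) = 0 \<or> vc n m (G j0) \<in> ?T" by simp
      then show ?thesis
      proof
        assume "vc n m (G j0) = 0" then show ?thesis using j True V.span_zero by simp
      next
        assume "vc n m (G j0) \<in> ?T" then show ?thesis using j True V.span_base by simp
      qed
    next
      case False
      then show ?thesis using j by (intro V.span_base) auto
    qed
  qed
  have "(\<lambda>i. vc n m (F i)) ` I \<subseteq> V.span ?T"
  proof
    fix v assume "v \<in> (\<lambda>i. vc n m (F i)) ` I"
    then obtain i where i: "i \<in> I" "v = vc n m (F i)" by auto
    have "v \<in> V.span (vc n m ` G ` J)" using span_bridge[of "G ` J" "F i" n m] sp i fJ by auto
    also have "\<dots> \<subseteq> V.span ?T" using sub V.span_minimal[OF sub] V.subspace_span by blast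
    finally show "v \<in> V.span ?T" .
  qed
  moreover have "finite ?T" using fJ by simp
  moreover note ib = indep_bridge[OF ind]
  ultimately have "card ((\<lambda>i. vc n m (F i)) ` I) \<le> card ?T"
    using V.independent_span_bound by blast
  also have "card ?T \<le> card (J - {j0})"
    by (metis card_image_le finite_Diff fJ finite_imageI image_comp order.trans)
  also have "\<dots> = card J - 1" using j0 fJ by simp
  finally have "card I \<le> card J - 1" using card_image ib by metis
  moreover have "card J \<ge> 1" using j0 fJ card_0_eq by fastforce
  ultimately show False using cd by linarith
qed

lemma mat_spanI:
  assumes "M \<in> carrier_mat n m" "\<forall>a<n. \<forall>b<m. M $$ (a,b) = (\<Sum>K\<in>S. c K * K $$ (a,b))"
  shows "M \<in> mat_span n m S"
  using assms unfolding mat_span_def by blast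

lemma mat_spanE:
  assumes "M \<in> mat_span n m S"
  obtains c where "M \<in> carrier_mat n m" "\<forall>a<n. \<forall>b<m. M $$ (a,b) = (\<Sum>K\<in>S. c K * K $$ (a,b))"
  using assms unfolding mat_span_def by blast

lemma mat_span_base:
  assumes "K \<in> S" "K \<in> carrier_mat n m" "finite S"
  shows "K \<in> mat_span n m S"
proof -
  have "\<forall>a<n. \<forall>b<m. K $$ (a,b) = (\<Sum>L\<in>S. (if L = K then 1 else 0) * L $$ (a,b))"
  proof (intro allI impI)
    fix a b
    have "(\<Sum>L\<in>S. (if L = K then 1 else 0) * L $$ (a,b)) = (\<Sum>L\<in>S. if L = K then K $$ (a,b) else 0)"
      by (rule sum.cong) auto
    also have "\<dots> = K $$ (a,b)" using assms by (simp add: sum.delta')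
    finally show "K $$ (a,b) = (\<Sum>L\<in>S. (if L = K then 1 else 0) * L $$ (a,b))" by simp
  qed
  then show ?thesis using assms by (intro mat_spanI)
qed

lemma mat_span_comb:
  assumes "\<forall>i\<in>I. P i \<in> mat_span n m T" and "M \<in> carrier_mat n m"
    and "\<forall>a<n. \<forall>b<m. M $$ (a,b) = (\<Sum>i\<in>I. d i * P i $$ (a,b))"
  shows "M \<in> mat_span n m T"
proof -
  have "\<forall>i\<in>I. \<exists>c. \<forall>a<n. \<forall>b<m. P i $$ (a,b) = (\<Sum>K\<in>T. c K * K $$ (a,b))"
  proof (intro ballI)
    fix i assume i: "i \<in> I"
    obtain c where "\<forall>a<n. \<forall>b<m. P i $$ (a,b) = (\<Sum>K\<in>T. c K * K $$ (a,b))"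
      using mat_spanE[OF assms(1)[rule_format, OF i]] by blast
    then show "\<exists>c. \<forall>a<n. \<forall>b<m. P i $$ (a,b) = (\<Sum>K\<in>T. c K * K $$ (a,b))" by blast
  qed
  then obtain c where c: "\<forall>i\<in>I. \<forall>a<n. \<forall>b<m. P i $$ (a,b) = (\<Sum>K\<in>T. c i K * K $$ (a,b))"
    by metis
  have "\<forall>a<n. \<forall>b<m. M $$ (a,b) = (\<Sum>K\<in>T. (\<Sum>i\<in>I. d i * c i K) * K $$ (a,b))"
  proof (intro allI impI)
    fix a b assume ab: "a < n" "b < m"
    have "M $$ (a,b) = (\<Sum>i\<in>I. d i * (\<Sum>K\<in>T. c i K * K $$ (a,b)))"
      using assms(3) c ab by (auto intro!: sum.cong)
    also have "\<dots> = (\<Sum>i\<in>I. \<Sum>K\<in>T. d i * c i K * K $$ (a,b))"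
      by (simp add: sum_distrib_left mult.assoc)
    also have "\<dots> = (\<Sum>K\<in>T. \<Sum>i\<in>I. d i * c i K * K $$ (a,b))"
      by (rule sum.swap)
    also have "\<dots> = (\<Sum>K\<in>T. (\<Sum>i\<in>I. d i * c i K) * K $$ (a,b))"
      by (simp add: sum_distrib_right)
    finally show "M $$ (a,b) = (\<Sum>K\<in>T. (\<Sum>i\<in>I. d i * c i K) * K $$ (a,b))" .
  qed
  then show ?thesis using assms(2) by (intro mat_spanI)
qed

lemma mat_span_mono:
  assumes "S \<subseteq> mat_span n m T"
  shows "mat_span n m S \<subseteq> mat_span n m T"
proof
  fix M assume "M \<in> mat_span n m S"
  then obtain c where "M \<in> carrier_mat n m" "\<forall>a<n. \<forall>b<m. M $$ (a,b) = (\<Sum>K\<in>S. c K * K $$ (a,b))"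
    by (rule mat_spanE)
  then show "M \<in> mat_span n m T" using assms by (intro mat_span_comb[where I=S and P=id and d=c]) auto
qed

lemma mat_span_image:
  assumes "finite I"
  shows "M \<in> mat_span n m (F ` I) \<longleftrightarrow> M \<in> carrier_mat n m \<and>
     (\<exists>d. \<forall>a<n. \<forall>b<m. M $$ (a,b) = (\<Sum>i\<in>I. d i * F i $$ (a,b)))"
proof
  assume "M \<in> mat_span n m (F ` I)"
  then obtain c where M: "M \<in> carrier_mat n m" and c: "\<forall>a<n. \<forall>b<m. M $$ (a,b) = (\<Sum>K\<in>F ` I. c K * K $$ (a,b))"
    by (rule mat_spanE)
  define rep where "rep K = (SOME i. i \<in> I \<and> F i = K)" for K
  define d where "d i = (if i = rep (F i) then c (F i) else 0)" for i
  have "\<forall>a<n. \<forall>b<m. M $$ (a,b) = (\<Sum>i\<in>I. d i * F i $$ (a,b))"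
  proof (intro allI impI)
    fix a b assume ab: "a < n" "b < m"
    have "(\<Sum>i\<in>I. d i * F i $$ (a,b)) = (\<Sum>K\<in>F ` I. \<Sum>i\<in>{i\<in>I. F i = K}. d i * F i $$ (a,b))"
      using assms by (rule sum.image_gen)
    also have "\<dots> = (\<Sum>K\<in>F ` I. c K * K $$ (a,b))"
    proof (rule sum.cong[OF refl])
      fix K assume K: "K \<in> F ` I"
      from K obtain i0 where i0: "i0 \<in> I" "F i0 = K" by auto
      have r: "rep K \<in> I \<and> F (rep K) = K" unfolding rep_def using someI[of "\<lambda>i. i \<in> I \<and> F i = K" i0] i0 by simp
      have "(\<Sum>i\<in>{i\<in>I. F i = K}. d i * F i $$ (a,b)) = (\<Sum>i\<in>{i\<in>I. F i = K}. if i = rep K then c K * K $$ (a,b) else 0)"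
        by (rule sum.cong) (auto simp: d_def)
      also have "\<dots> = c K * K $$ (a,b)" using r assms by (simp add: sum.delta')
      finally show "(\<Sum>i\<in>{i\<in>I. F i = K}. d i * F i $$ (a,b)) = c K * K $$ (a,b)" .
    qed
    finally show "M $$ (a,b) = (\<Sum>i\<in>I. d i * F i $$ (a,b))" using c ab by simp
  qed
  then show "M \<in> carrier_mat n m \<and> (\<exists>d. \<forall>a<n. \<forall>b<m. M $$ (a,b) = (\<Sum>i\<in>I. d i * F i $$ (a,b)))"
    using M by blast
next
  assume "M \<in> carrier_mat n m \<and> (\<exists>d. \<forall>a<n. \<forall>b<m. M $$ (a,b) = (\<Sum>i\<in>I. d i * F i $$ (a,b)))"
  then obtain d where M: "M \<in> carrier_mat n m" and d: "\<forall>a<n. \<forall>b<m. M $$ (a,b) = (\<Sum>i\<in>I. d i * F i $$ (a,b))"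
    by blast
  define c where "c K = (\<Sum>i\<in>{i\<in>I. F i = K}. d i)" for K
  have "\<forall>a<n. \<forall>b<m. M $$ (a,b) = (\<Sum>K\<in>F ` I. c K * K $$ (a,b))"
  proof (intro allI impI)
    fix a b assume ab: "a < n" "b < m"
    have "(\<Sum>K\<in>F ` I. c K * K $$ (a,b)) = (\<Sum>K\<in>F ` I. \<Sum>i\<in>{i\<in>I. F i = K}. d i * F i $$ (a,b))"
      by (rule sum.cong[OF refl]) (auto simp: c_def sum_distrib_right)
    also have "\<dots> = (\<Sum>i\<in>I. d i * F i $$ (a,b))"
      using assms by (rule sum.image_gen[symmetric])
    finally show "M $$ (a,b) = (\<Sum>K\<in>F ` I. c K * K $$ (a,b))" using d ab by simp
  qed
  then show "M \<in> mat_span n m (F ` I)" using M by (intro mat_spanI)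
qed

lemma mult_entry:
  assumes "A \<in> carrier_mat n m" "B \<in> carrier_mat m l" "a < n" "b < l"
  shows "(A * B) $$ (a,b) = (\<Sum>k<m. A $$ (a,k) * B $$ (k,b))"
  using assms by (simp add: scalar_prod_def lessThan_atLeast0)

lemma mult_comb_left:
  fixes M Q :: "real mat" and P :: "'i \<Rightarrow> real mat"
  assumes "M \<in> carrier_mat n m" "\<forall>r\<in>R. P r \<in> carrier_mat n m" "Q \<in> carrier_mat m l"
    and "\<forall>a<n. \<forall>k<m. M $$ (a,k) = (\<Sum>r\<in>R. c r * P r $$ (a,k))"
  shows "\<forall>a<n. \<forall>b<l. (M * Q) $$ (a,b) = (\<Sum>r\<in>R. c r * (P r * Q) $$ (a,b))"
proof (intro allI impI)
  fix a b assume ab: "a < n" "b < l"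
  have "(M * Q) $$ (a,b) = (\<Sum>k<m. M $$ (a,k) * Q $$ (k,b))" by (rule mult_entry[OF assms(1,3) ab])
  also have "\<dots> = (\<Sum>k<m. \<Sum>r\<in>R. c r * P r $$ (a,k) * Q $$ (k,b))"
    by (rule sum.cong[OF refl]) (use assms(4) ab in \<open>simp add: sum_distrib_right\<close>)
  also have "\<dots> = (\<Sum>r\<in>R. \<Sum>k<m. c r * P r $$ (a,k) * Q $$ (k,b))" by (rule sum.swap)
  also have "\<dots> = (\<Sum>r\<in>R. c r * (P r * Q) $$ (a,b))"
  proof (rule sum.cong[OF refl])
    fix r assume "r \<in> R"
    then show "(\<Sum>k<m. c r * P r $$ (a,k) * Q $$ (k,b)) = c r * (P r * Q) $$ (a,b)"
      using assms ab by (simp add: mult_entry[of "P r" n m Q l] sum_distrib_left mult.assoc)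
  qed
  finally show "(M * Q) $$ (a,b) = (\<Sum>r\<in>R. c r * (P r * Q) $$ (a,b))" .
qed

lemma mult_comb_right:
  fixes M Q :: "real mat" and P :: "'i \<Rightarrow> real mat"
  assumes "M \<in> carrier_mat n m" "\<forall>r\<in>R. P r \<in> carrier_mat m l" "Q \<in> carrier_mat m l"
    and "\<forall>k<m. \<forall>b<l. Q $$ (k,b) = (\<Sum>r\<in>R. c r * P r $$ (k,b))"
  shows "\<forall>a<n. \<forall>b<l. (M * Q) $$ (a,b) = (\<Sum>r\<in>R. c r * (M * P r) $$ (a,b))"
proof (intro allI impI)
  fix a b assume ab: "a < n" "b < l"
  have "(M * Q) $$ (a,b) = (\<Sum>k<m. M $$ (a,k) * Q $$ (k,b))" by (rule mult_entry[OF assms(1,3) ab])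
  also have "\<dots> = (\<Sum>k<m. \<Sum>r\<in>R. c r * M $$ (a,k) * P r $$ (k,b))"
    by (rule sum.cong[OF refl]) (use assms(4) ab in \<open>simp add: sum_distrib_left mult_ac\<close>)
  also have "\<dots> = (\<Sum>r\<in>R. \<Sum>k<m. c r * M $$ (a,k) * P r $$ (k,b))" by (rule sum.swap)
  also have "\<dots> = (\<Sum>r\<in>R. c r * (M * P r) $$ (a,b))"
  proof (rule sum.cong[OF refl])
    fix r assume "r \<in> R"
    then show "(\<Sum>k<m. c r * M $$ (a,k) * P r $$ (k,b)) = c r * (M * P r) $$ (a,b)"
      using assms ab by (simp add: mult_entry[of M n m "P r" l] sum_distrib_left mult.assoc)
  qed
  finally show "(M * Q) $$ (a,b) = (\<Sum>r\<in>R. c r * (M * P r) $$ (a,b))" .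
qed

lemma lin_indep_nonzero:
  assumes "lin_indep_family n m I G" "s \<in> I"
  shows "\<exists>a<n. \<exists>b<m. G s $$ (a,b) \<noteq> 0"
proof (rule ccontr)
  assume z: "\<not> (\<exists>a<n. \<exists>b<m. G s $$ (a,b) \<noteq> 0)"
  define c where "c = (\<lambda>k. if k = s then 1 else (0::real))"
  have fin: "finite I" using assms by (simp add: lin_indep_family_def)
  have h2: "\<forall>c. (\<forall>a<n. \<forall>b<m. (\<Sum>k\<in>I. c k * G k $$ (a,b)) = 0) \<longrightarrow> (\<forall>k\<in>I. c k = 0)"
    using assms(1) unfolding lin_indep_family_def by (rule conjunct2)
  have "\<forall>a<n. \<forall>b<m. (\<Sum>k\<in>I. c k * G k $$ (a,b)) = 0"
  proof (intro allI impI)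
    fix a b assume ab: "a < n" "b < m"
    have "(\<Sum>k\<in>I. c k * G k $$ (a,b)) = (\<Sum>k\<in>I. if k = s then G s $$ (a,b) else 0)"
      by (rule sum.cong) (auto simp: c_def)
    also have "\<dots> = 0" using fin assms(2) z ab by (simp add: sum.delta')
    finally show "(\<Sum>k\<in>I. c k * G k $$ (a,b)) = 0" .
  qed
  then have "c s = 0" using mp[OF spec[OF h2, of c]] assms(2) by blast
  then show False by (simp add: c_def)
qed

lemma core:
  fixes N F G X :: "nat \<Rightarrow> real mat"
  assumes t: "t > 0"
    and Nc: "\<forall>h\<in>{1..t}. N h \<in> carrier_mat n m"
    and Fc: "\<forall>r\<in>{0..t-1}. F r \<in> carrier_mat n m"
    and Gc: "\<forall>r\<in>{0..t}. G r \<in> carrier_mat n n"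
    and Xc: "\<forall>r\<in>{0..t}. X r \<in> carrier_mat n n"
    and spNF: "mat_span n m (F ` {0..t-1}) = mat_span n m (N ` {1..t})"
    and FF: "\<forall>r\<in>{0..t-1}. \<forall>s\<in>{0..t-1}. F r * transpose_mat (F s) = (if r = s then G r else 0\<^sub>m n n)"
    and GG: "\<forall>r\<in>{0..t}. \<forall>s\<in>{0..t}. G r * G s = (if r = s then G r else 0\<^sub>m n n)"
    and Gi: "lin_indep_family n n {0..t} G"
    and spGX: "mat_span n n (G ` {0..t}) = mat_span n n (X ` {0..t})"
    and X0: "X 0 = 1\<^sub>m n"
  shows "(\<forall>i\<in>{1..t}. \<forall>j\<in>{1..t}. N i * transpose_mat (N j) = N j * transpose_mat (N i)) \<and>
    mat_span n n ({N i * transpose_mat (N j) | i j. i \<in> {1..t} \<and> j \<in> {1..t}} \<union> {1\<^sub>m n})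
      = mat_span n n (X ` {0..t})"
proof -
  let ?R = "{0..t-1}"
  have Nd[simp]: "dim_row (N h) = n" "dim_col (N h) = m" if "h \<in> {1..t}" for h using Nc that by auto
  have Fd[simp]: "dim_row (F h) = n" "dim_col (F h) = m" if "h \<in> {0..t-1}" for h using Fc that by auto
  have Gd[simp]: "dim_row (G h) = n" "dim_col (G h) = n" if "h \<in> {0..t}" for h using Gc that by auto
  have Xd[simp]: "dim_row (X h) = n" "dim_col (X h) = n" if "h \<in> {0..t}" for h using Xc that by auto
  have "\<forall>h\<in>{1..t}. \<exists>d. \<forall>a<n. \<forall>b<m. N h $$ (a,b) = (\<Sum>r\<in>?R. d r * F r $$ (a,b))"
  proof
    fix h assume h: "h \<in> {1..t}"
    have "N h \<in> mat_span n m (N ` {1..t})" using h Nc by (intro mat_span_base) auto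
    then have "N h \<in> mat_span n m (F ` ?R)" using spNF by simp
    then show "\<exists>d. \<forall>a<n. \<forall>b<m. N h $$ (a,b) = (\<Sum>r\<in>?R. d r * F r $$ (a,b))"
      using mat_span_image[of ?R] by blast
  qed
  then obtain c where c: "\<forall>h\<in>{1..t}. \<forall>a<n. \<forall>b<m. N h $$ (a,b) = (\<Sum>r\<in>?R. c h r * F r $$ (a,b))"
    by metis
  have NN: "\<forall>a<n. \<forall>b<n. (N i * transpose_mat (N j)) $$ (a,b) = (\<Sum>r\<in>?R. c i r * c j r * G r $$ (a,b))"
    if ij: "i \<in> {1..t}" "j \<in> {1..t}" for i j
  proof -
    have NjT: "transpose_mat (N j) \<in> carrier_mat m n" using Nc ij by auto
    have FN: "\<forall>a<n. \<forall>b<n. (F r * transpose_mat (N j)) $$ (a,b) = c j r * G r $$ (a,b)"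
      if r: "r \<in> ?R" for r
    proof -
      have "\<forall>a<n. \<forall>b<n. (F r * transpose_mat (N j)) $$ (a,b) = (\<Sum>s\<in>?R. c j s * (F r * transpose_mat (F s)) $$ (a,b))"
      proof (rule mult_comb_right)
        show "\<forall>k<m. \<forall>b<n. transpose_mat (N j) $$ (k,b) = (\<Sum>s\<in>?R. c j s * transpose_mat (F s) $$ (k,b))"
        proof (intro allI impI)
          fix k b assume kb: "k < m" "b < n"
          have "transpose_mat (N j) $$ (k,b) = N j $$ (b,k)" using NjT kb by simp
          also have "\<dots> = (\<Sum>s\<in>?R. c j s * F s $$ (b,k))" using c ij kb by simp
          also have "\<dots> = (\<Sum>s\<in>?R. c j s * transpose_mat (F s) $$ (k,b))"
          proof (rule sum.cong[OF refl])
            fix s assume "s \<in> ?R"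
            then have "F s \<in> carrier_mat n m" using Fc by blast
            then show "c j s * F s $$ (b,k) = c j s * transpose_mat (F s) $$ (k,b)" using kb by simp
          qed
          finally show "transpose_mat (N j) $$ (k,b) = (\<Sum>s\<in>?R. c j s * transpose_mat (F s) $$ (k,b))" .
        qed
      qed (use Fc r NjT in auto)
      moreover have "(\<Sum>s\<in>?R. c j s * (F r * transpose_mat (F s)) $$ (a,b)) = c j r * G r $$ (a,b)"
        if ab: "a < n" "b < n" for a b
      proof -
        have "(\<Sum>s\<in>?R. c j s * (F r * transpose_mat (F s)) $$ (a,b)) = (\<Sum>s\<in>?R. if s = r then c j r * G r $$ (a,b) else 0)"
          using FF r ab by (intro sum.cong) auto
        also have "\<dots> = c j r * G r $$ (a,b)" using r by (simp add: sum.delta)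
        finally show ?thesis .
      qed
      ultimately show ?thesis by simp
    qed
    have "\<forall>a<n. \<forall>b<n. (N i * transpose_mat (N j)) $$ (a,b) = (\<Sum>r\<in>?R. c i r * (F r * transpose_mat (N j)) $$ (a,b))"
      using Fc NjT c ij Nc by (intro mult_comb_left) auto
    then show ?thesis using FN by (simp add: mult.assoc)
  qed
  have C5: "\<forall>i\<in>{1..t}. \<forall>j\<in>{1..t}. N i * transpose_mat (N j) = N j * transpose_mat (N i)"
  proof (intro ballI)
    fix i j assume ij: "i \<in> {1..t}" "j \<in> {1..t}"
    have d1: "N i * transpose_mat (N j) \<in> carrier_mat n n" "N j * transpose_mat (N i) \<in> carrier_mat n n"
    proof -
      have Ni: "N i \<in> carrier_mat n m" "N j \<in> carrier_mat n m" using Nc ij by blast+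
      show "N i * transpose_mat (N j) \<in> carrier_mat n n" "N j * transpose_mat (N i) \<in> carrier_mat n n"
        using mult_carrier_mat[OF Ni(1) transpose_carrier_mat[THEN iffD2, OF Ni(2)]]
          mult_carrier_mat[OF Ni(2) transpose_carrier_mat[THEN iffD2, OF Ni(1)]] by auto
    qed
    show "N i * transpose_mat (N j) = N j * transpose_mat (N i)"
    proof (rule eq_matI)
      fix a b assume "a < dim_row (N j * transpose_mat (N i))" "b < dim_col (N j * transpose_mat (N i))"
      then have ab: "a < n" "b < n" using d1 by auto
      show "(N i * transpose_mat (N j)) $$ (a,b) = (N j * transpose_mat (N i)) $$ (a,b)"
        using NN[OF ij] NN[OF ij(2,1)] ab by (simp add: mult.commute)
    qed (use d1 ij in auto)
  qed
  have Gnz: "\<exists>a<n. \<exists>b<n. G s $$ (a,b) \<noteq> 0" if "s \<in> {0..t}" for s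
    using lin_indep_nonzero[OF Gi that] .
  have oX: "1\<^sub>m n \<in> X ` {0..t}" by (rule image_eqI[where x=0]) (use X0 in auto)
  have "1\<^sub>m n \<in> mat_span n n (X ` {0..t})" using oX by (intro mat_span_base) auto
  then have "1\<^sub>m n \<in> mat_span n n (G ` {0..t})" using spGX by simp
  then obtain d where d: "\<forall>a<n. \<forall>b<n. 1\<^sub>m n $$ (a,b) = (\<Sum>r\<in>{0..t}. d r * G r $$ (a,b))"
    using mat_span_image[of "{0..t}"] by blast
  have d1: "d s = 1" if s: "s \<in> {0..t}" for s
  proof -
    have "\<forall>a<n. \<forall>b<n. (1\<^sub>m n * G s) $$ (a,b) = (\<Sum>r\<in>{0..t}. d r * (G r * G s) $$ (a,b))"
      using Gc s d by (intro mult_comb_left) auto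
    moreover have "(\<Sum>r\<in>{0..t}. d r * (G r * G s) $$ (a,b)) = d s * G s $$ (a,b)" if ab: "a < n" "b < n" for a b
    proof -
      have "(\<Sum>r\<in>{0..t}. d r * (G r * G s) $$ (a,b)) = (\<Sum>r\<in>{0..t}. if r = s then d s * G s $$ (a,b) else 0)"
        using GG s ab by (intro sum.cong) auto
      also have "\<dots> = d s * G s $$ (a,b)" using s by (simp add: sum.delta)
      finally show ?thesis .
    qed
    moreover have "1\<^sub>m n * G s = G s" using Gc s by auto
    ultimately have e: "\<forall>a<n. \<forall>b<n. G s $$ (a,b) = d s * G s $$ (a,b)" by simp
    from Gnz[OF s] obtain a b where "a < n" "b < n" "G s $$ (a,b) \<noteq> 0" by blast
    with e show "d s = 1" by (metis mult_cancel_right2)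
  qed
  have Gsum: "\<forall>a<n. \<forall>b<n. 1\<^sub>m n $$ (a,b) = (\<Sum>r\<in>{0..t}. G r $$ (a,b))"
    using d d1 by simp
  define S where "S = {N i * transpose_mat (N j) | i j. i \<in> {1..t} \<and> j \<in> {1..t}} \<union> {1\<^sub>m n}"
  have "{N i * transpose_mat (N j) | i j. i \<in> {1..t} \<and> j \<in> {1..t}}
      = (\<lambda>p. N (fst p) * transpose_mat (N (snd p))) ` ({1..t} \<times> {1..t})" by force
  then have finS: "finite S" unfolding S_def by simp
  have NNS: "N i * transpose_mat (N j) \<in> mat_span n n S" if "i \<in> {1..t}" "j \<in> {1..t}" for i j
    using that Nc finS by (intro mat_span_base) (auto simp: S_def)
  have oneS: "1\<^sub>m n \<in> mat_span n n S" using finS by (intro mat_span_base) (auto simp: S_def)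
  have tins: "{0..t} = insert t ?R" using t by auto
  have sub1: "S \<subseteq> mat_span n n (X ` {0..t})"
  proof
    fix M assume "M \<in> S"
    then consider "M = 1\<^sub>m n" | i j where "i \<in> {1..t}" "j \<in> {1..t}" "M = N i * transpose_mat (N j)"
      unfolding S_def by blast
    then show "M \<in> mat_span n n (X ` {0..t})"
    proof cases
      case 1 then show ?thesis using \<open>1\<^sub>m n \<in> mat_span n n (X ` {0..t})\<close> by simp
    next
      case (2 i j)
      have "\<forall>a<n. \<forall>b<n. M $$ (a,b) = (\<Sum>r\<in>{0..t}. (if r = t then 0 else c i r * c j r) * G r $$ (a,b))"
      proof (intro allI impI)
        fix a b assume ab: "a < n" "b < n"
        have "(\<Sum>r\<in>{0..t}. (if r = t then 0 else c i r * c j r) * G r $$ (a,b))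
            = (\<Sum>r\<in>?R. (if r = t then 0 else c i r * c j r) * G r $$ (a,b))"
          unfolding tins using t by (subst sum.insert) auto
        also have "\<dots> = (\<Sum>r\<in>?R. c i r * c j r * G r $$ (a,b))"
          using t by (intro sum.cong) auto
        finally show "M $$ (a,b) = (\<Sum>r\<in>{0..t}. (if r = t then 0 else c i r * c j r) * G r $$ (a,b))"
          using NN[OF 2(1,2)] ab 2(3) by simp
      qed
      moreover have "M \<in> carrier_mat n n"
      proof -
        have Ni: "N i \<in> carrier_mat n m" "N j \<in> carrier_mat n m" using Nc 2(1,2) by blast+
        show ?thesis using mult_carrier_mat[OF Ni(1) transpose_carrier_mat[THEN iffD2, OF Ni(2)]] 2(3) by simp
      qed
      ultimately have "M \<in> mat_span n n (G ` {0..t})"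
        by (intro mat_span_image[of "{0..t}", THEN iffD2] conjI exI) auto
      then show ?thesis using spGX by simp
    qed
  qed
  have GrS: "G r \<in> mat_span n n S" if r: "r \<in> ?R" for r
  proof -
    have "F r \<in> mat_span n m (F ` ?R)" using r Fc by (intro mat_span_base) auto
    then have "F r \<in> mat_span n m (N ` {1..t})" using spNF by simp
    then obtain e where e: "\<forall>a<n. \<forall>b<m. F r $$ (a,b) = (\<Sum>h\<in>{1..t}. e h * N h $$ (a,b))"
      using mat_span_image[of "{1..t}"] by blast
    have FrT: "transpose_mat (F r) \<in> carrier_mat m n" using Fc r by auto
    have NF: "N h * transpose_mat (F r) \<in> mat_span n n S" if h: "h \<in> {1..t}" for h
    proof (rule mat_span_comb[where I="{1..t}" and P="\<lambda>k. N h * transpose_mat (N k)" and d=e])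
      show "\<forall>i\<in>{1..t}. N h * transpose_mat (N i) \<in> mat_span n n S" using NNS h by auto
      show "N h * transpose_mat (F r) \<in> carrier_mat n n" using h Nc FrT by auto
      show "\<forall>a<n. \<forall>b<n. (N h * transpose_mat (F r)) $$ (a,b) = (\<Sum>i\<in>{1..t}. e i * (N h * transpose_mat (N i)) $$ (a,b))"
        using Nc h FrT e by (intro mult_comb_right) auto
    qed
    have "F r * transpose_mat (F r) \<in> mat_span n n S"
    proof (rule mat_span_comb[where I="{1..t}" and P="\<lambda>h. N h * transpose_mat (F r)" and d=e])
      show "\<forall>i\<in>{1..t}. N i * transpose_mat (F r) \<in> mat_span n n S" using NF by auto
      show "F r * transpose_mat (F r) \<in> carrier_mat n n" using Fc r by auto
      show "\<forall>a<n. \<forall>b<n. (F r * transpose_mat (F r)) $$ (a,b) = (\<Sum>i\<in>{1..t}. e i * (N i * transpose_mat (F r)) $$ (a,b))"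
        using Nc Fc r FrT e by (intro mult_comb_left) auto
    qed
    then show ?thesis using FF r by simp
  qed
  have GtS: "G t \<in> mat_span n n S"
  proof (rule mat_span_comb[where I="{0..t}" and P="\<lambda>r. if r = t then 1\<^sub>m n else G r"
        and d="\<lambda>r. if r = t then 1 else -1"])
    show "\<forall>i\<in>{0..t}. (if i = t then 1\<^sub>m n else G i) \<in> mat_span n n S"
      using GrS oneS t by auto
    show "G t \<in> carrier_mat n n" using Gc by auto
    show "\<forall>a<n. \<forall>b<n. G t $$ (a,b) = (\<Sum>i\<in>{0..t}. (if i = t then 1 else -1) * (if i = t then 1\<^sub>m n else G i) $$ (a,b))"
    proof (intro allI impI)
      fix a b assume ab: "a < n" "b < n"
      have tn: "t \<notin> ?R" using t by auto
      have "(\<Sum>i\<in>{0..t}. (if i = t then 1 else -1) * (if i = t then 1\<^sub>m n else G i) $$ (a,b))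
          = 1\<^sub>m n $$ (a,b) + (\<Sum>i\<in>?R. (if i = t then 1 else -1) * (if i = t then 1\<^sub>m n else G i) $$ (a,b))"
        unfolding tins using tn by (subst sum.insert) auto
      also have "(\<Sum>i\<in>?R. (if i = t then 1 else -1) * (if i = t then 1\<^sub>m n else G i) $$ (a,b)) = - (\<Sum>i\<in>?R. G i $$ (a,b))"
        using t by (auto simp: sum_negf[symmetric] intro!: sum.cong)
      also have "1\<^sub>m n $$ (a,b) = G t $$ (a,b) + (\<Sum>i\<in>?R. G i $$ (a,b))"
        using Gsum ab tn unfolding tins by simp
      finally show "G t $$ (a,b) = (\<Sum>i\<in>{0..t}. (if i = t then 1 else -1) * (if i = t then 1\<^sub>m n else G i) $$ (a,b))"
        by simp
    qed
  qed
  have sub2: "G ` {0..t} \<subseteq> mat_span n n S"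
  proof
    fix M assume "M \<in> G ` {0..t}"
    then obtain r where r: "r \<in> {0..t}" "M = G r" by auto
    show "M \<in> mat_span n n S"
    proof (cases "r = t")
      case True then show ?thesis using r GtS by simp
    next
      case False then show ?thesis using r GrS by auto
    qed
  qed
  have "mat_span n n S = mat_span n n (X ` {0..t})"
  proof
    show "mat_span n n S \<subseteq> mat_span n n (X ` {0..t})" using mat_span_mono[OF sub1] .
    show "mat_span n n (X ` {0..t}) \<subseteq> mat_span n n S" using mat_span_mono[OF sub2] spGX by simp
  qed
  with C5 show ?thesis unfolding S_def by blast
qed

lemma fo1[simp]: "fib_off x 1 = 0" by (simp add: fib_off_def)
lemma fo2[simp]: "fib_off x 2 = x 1" by (simp add: fib_off_def numeral_2_eq_2)
lemma fo3[simp]: "fib_off x 3 = x 1 + x 2"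
proof -
  have "{1..<3::nat} = {1,2}" by auto
  then show ?thesis by (simp add: fib_off_def)
qed

lemma fo1'[simp]: "fib_off x (Suc 0) = 0" by (simp add: fib_off_def)
lemma fo2'[simp]: "fib_off x (Suc (Suc 0)) = x 1" by (simp add: fib_off_def)

definition lo :: "(nat \<Rightarrow> nat) \<Rightarrow> nat \<Rightarrow> nat" where
  "lo x i = (if i = 1 then 0 else x 1)"

lemma hat_idx:
  assumes "i \<in> {1,2}" "j \<in> {1,2}" "p < x 1 + x 2" "q < x 1 + x 2"
  shows "hat_mat 2 x i j M $$ (p,q) =
    (if (p < x 1 \<longleftrightarrow> i = 1) \<and> (q < x 1 \<longleftrightarrow> j = 1) then M $$ (p - lo x i, q - lo x j) else 0)"
proof -
  have "i = 1 \<or> i = 2" "j = 1 \<or> j = 2" using assms(1,2) by auto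
  then show ?thesis using assms(3,4) by (elim disjE) (simp_all add: hat_mat_def lo_def)
qed

lemma hat_dim[simp]: "dim_row (hat_mat 2 x i j M) = x 1 + x 2" "dim_col (hat_mat 2 x i j M) = x 1 + x 2"
  by (simp_all add: hat_mat_def)

lemma hat_carrier[simp]: "hat_mat 2 x i j M \<in> carrier_mat (x 1 + x 2) (x 1 + x 2)"
  by (rule carrier_matI) (simp_all only: hat_dim)

lemma hat_idx_in:
  assumes "i \<in> {1,2}" "j \<in> {1,2}" "a < x i" "b < x j"
  shows "hat_mat 2 x i j M $$ (lo x i + a, lo x j + b) = M $$ (a,b)"
proof -
  have pq1: "lo x i + a < x 1 + x 2"
  proof (cases "i = 1")
    case True then show ?thesis using assms(3) by (simp add: lo_def)
  next
    case False then have "i = 2" using assms(1) by blast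
    then show ?thesis using assms(3) by (simp add: lo_def)
  qed
  have pq2: "lo x j + b < x 1 + x 2"
  proof (cases "j = 1")
    case True then show ?thesis using assms(4) by (simp add: lo_def)
  next
    case False then have "j = 2" using assms(2) by blast
    then show ?thesis using assms(4) by (simp add: lo_def)
  qed
  note pq = pq1 pq2
  have c1: "lo x i + a < x 1 \<longleftrightarrow> i = 1"
  proof (cases "i = 1")
    case True then show ?thesis using assms(3) by (simp add: lo_def)
  next
    case False then show ?thesis by (simp add: lo_def)
  qed
  have c2: "lo x j + b < x 1 \<longleftrightarrow> j = 1"
  proof (cases "j = 1")
    case True then show ?thesis using assms(4) by (simp add: lo_def)
  next
    case False then show ?thesis by (simp add: lo_def)
  qed
  have C: "(lo x i + a < x 1 \<longleftrightarrow> i = 1) \<and> (lo x j + b < x 1 \<longleftrightarrow> j = 1)" using c1 c2 by blast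
  have "hat_mat 2 x i j M $$ (lo x i + a, lo x j + b) = M $$ (lo x i + a - lo x i, lo x j + b - lo x j)"
    using hat_idx[OF assms(1,2) pq, of M] if_P[OF C] by metis
  also have "lo x i + a - lo x i = a" by simp
  also have "lo x j + b - lo x j = b" by simp
  finally show ?thesis .
qed


lemma hat_eq:
  assumes ij: "i \<in> {1,2}" "j \<in> {1,2}" "i' \<in> {1,2}" "j' \<in> {1,2}"
    and M: "M \<in> carrier_mat (x i) (x j)" and M': "M' \<in> carrier_mat (x i') (x j')"
    and nz: "\<exists>a<x i. \<exists>b<x j. M $$ (a,b) \<noteq> 0"
    and eq: "hat_mat 2 x i j M = hat_mat 2 x i' j' M'"
  shows "i = i' \<and> j = j' \<and> M = M'"
proof -
  from nz obtain a b where ab: "a < x i" "b < x j" "M $$ (a,b) \<noteq> 0" by blast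
  have pq: "lo x i + a < x 1 + x 2" "lo x j + b < x 1 + x 2" using ij ab by (auto simp: lo_def)
  have "hat_mat 2 x i' j' M' $$ (lo x i + a, lo x j + b) \<noteq> 0"
    using hat_idx_in[OF ij(1,2) ab(1,2), of M] ab(3) eq by simp
  note nz0 = this
  have v: "hat_mat 2 x i' j' M' $$ (lo x i + a, lo x j + b) =
    (if (lo x i + a < x 1 \<longleftrightarrow> i' = 1) \<and> (lo x j + b < x 1 \<longleftrightarrow> j' = 1) then M' $$ (lo x i + a - lo x i', lo x j + b - lo x j') else 0)"
    by (rule hat_idx[OF ij(3,4) pq])
  have c: "(lo x i + a < x 1 \<longleftrightarrow> i' = 1) \<and> (lo x j + b < x 1 \<longleftrightarrow> j' = 1)"
  proof (rule ccontr)
    assume "\<not> ((lo x i + a < x 1 \<longleftrightarrow> i' = 1) \<and> (lo x j + b < x 1 \<longleftrightarrow> j' = 1))"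
    then have "hat_mat 2 x i' j' M' $$ (lo x i + a, lo x j + b) = 0" using v by presburger
    with nz0 show False by simp
  qed
  have ii1: "i = i'"
  proof (cases "i = 1")
    case True
    then have "lo x i + a < x 1" using ab(1) by (simp add: lo_def)
    then have "i' = 1" using c by blast
    then show ?thesis using True by simp
  next
    case False then have i2: "i = 2" using ij(1) by blast
    then have "\<not> (lo x i + a < x 1)" by (simp add: lo_def)
    then have "i' \<noteq> 1" using c by blast
    then have "i' = 2" using ij(3) by blast
    then show ?thesis using i2 by simp
  qed
  have ii2: "j = j'"
  proof (cases "j = 1")
    case True
    then have "lo x j + b < x 1" using ab(2) by (simp add: lo_def)
    then have "j' = 1" using c by blast
    then show ?thesis using True by simp
  next
    case False then have j2: "j = 2" using ij(2) by blast
    then have "\<not> (lo x j + b < x 1)" by (simp add: lo_def)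
    then have "j' \<noteq> 1" using c by blast
    then have "j' = 2" using ij(4) by blast
    then show ?thesis using j2 by simp
  qed
  note ii = ii1 ii2
  have "M = M'"
  proof (rule eq_matI)
    fix a' b' assume "a' < dim_row M'" "b' < dim_col M'"
    moreover have "dim_row M' = x i'" "dim_col M' = x j'" using carrier_matD[OF M'] by simp_all
    ultimately have ab': "a' < x i" "b' < x j" unfolding ii by simp_all
    have eq': "hat_mat 2 x i j M = hat_mat 2 x i j M'" using eq ii by simp
    have "M $$ (a',b') = hat_mat 2 x i j M $$ (lo x i + a', lo x j + b')"
      by (rule hat_idx_in[OF ij(1,2) ab', symmetric])
    also have "\<dots> = hat_mat 2 x i j M' $$ (lo x i + a', lo x j + b')" by (simp only: eq')
    also have "\<dots> = M' $$ (a',b')" by (rule hat_idx_in[OF ij(1,2) ab'])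
    finally show "M $$ (a',b') = M' $$ (a',b')" .
  qed (use carrier_matD[OF M] carrier_matD[OF M'] ii in simp_all)
  with ii show ?thesis by simp
qed


lemma hat_transpose:
  assumes "M \<in> carrier_mat (x 1) (x 2)"
  shows "transpose_mat (hat_mat 2 x 1 2 M) = hat_mat 2 x 2 1 (transpose_mat M)"
  by (rule eq_matI) (use assms in \<open>auto simp: hat_idx lo_def\<close>)

lemma hat_transpose2:
  assumes "M \<in> carrier_mat (x 2) (x 1)"
  shows "transpose_mat (hat_mat 2 x 2 1 M) = hat_mat 2 x 1 2 (transpose_mat M)"
  by (rule eq_matI) (use assms in \<open>auto simp: hat_idx lo_def\<close>)

lemma hat_mult_zero:
  assumes "i \<in> {1,2}" "j \<in> {1,2}" "j' \<in> {1,2}" "h \<in> {1,2}" "j \<noteq> j'"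
  shows "hat_mat 2 x i j M * hat_mat 2 x j' h M' = 0\<^sub>m (x 1 + x 2) (x 1 + x 2)"
proof (rule eq_matI)
  fix a b assume "a < dim_row (0\<^sub>m (x 1 + x 2) (x 1 + x 2) :: real mat)" "b < dim_col (0\<^sub>m (x 1 + x 2) (x 1 + x 2) :: real mat)"
  then have ab: "a < x 1 + x 2" "b < x 1 + x 2" by auto
  have "(hat_mat 2 x i j M * hat_mat 2 x j' h M') $$ (a,b)
     = (\<Sum>k<x 1 + x 2. hat_mat 2 x i j M $$ (a,k) * hat_mat 2 x j' h M' $$ (k,b))"
    by (rule mult_entry[OF hat_carrier hat_carrier ab])
  also have "\<dots> = 0"
  proof (rule sum.neutral, rule ballI)
    fix k assume "k \<in> {..<x 1 + x 2}"
    then have k: "k < x 1 + x 2" by simp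
    show "hat_mat 2 x i j M $$ (a,k) * hat_mat 2 x j' h M' $$ (k,b) = 0"
      using hat_idx[OF assms(1,2) ab(1) k, of M] hat_idx[OF assms(3,4) k ab(2), of M'] assms(1-3,5)
      by auto
  qed
  finally show "(hat_mat 2 x i j M * hat_mat 2 x j' h M') $$ (a,b) = 0\<^sub>m (x 1 + x 2) (x 1 + x 2) $$ (a,b)"
    using ab by simp
qed auto

lemma hat_11: "M \<in> carrier_mat (x 1) (x 1) \<Longrightarrow>
  hat_mat 2 x 1 1 M = four_block_mat M (0\<^sub>m (x 1) (x 2)) (0\<^sub>m (x 2) (x 1)) (0\<^sub>m (x 2) (x 2))"
  by (rule eq_matI) (auto simp: hat_idx lo_def)
lemma hat_12: "M \<in> carrier_mat (x 1) (x 2) \<Longrightarrow>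
  hat_mat 2 x 1 2 M = four_block_mat (0\<^sub>m (x 1) (x 1)) M (0\<^sub>m (x 2) (x 1)) (0\<^sub>m (x 2) (x 2))"
  by (rule eq_matI) (auto simp: hat_idx lo_def)
lemma hat_21: "M \<in> carrier_mat (x 2) (x 1) \<Longrightarrow>
  hat_mat 2 x 2 1 M = four_block_mat (0\<^sub>m (x 1) (x 1)) (0\<^sub>m (x 1) (x 2)) M (0\<^sub>m (x 2) (x 2))"
  by (rule eq_matI) (auto simp: hat_idx lo_def)
lemma hat_22: "M \<in> carrier_mat (x 2) (x 2) \<Longrightarrow>
  hat_mat 2 x 2 2 M = four_block_mat (0\<^sub>m (x 1) (x 1)) (0\<^sub>m (x 1) (x 2)) (0\<^sub>m (x 2) (x 1)) M"
  by (rule eq_matI) (auto simp: hat_idx lo_def)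

lemma vc_zero: "vc n m M = 0 \<longleftrightarrow> (\<forall>a<n. \<forall>b<m. M $$ (a,b) = 0)"
  by (auto simp: vc_def fun_eq_iff)

lemma block_dim:
  fixes F G :: "nat \<Rightarrow> real mat"
  assumes ind: "lin_indep_family n m {0..T-e} F"
    and Fc: "\<forall>k\<in>{0..T-e}. F k \<in> carrier_mat n m"
    and sp: "mat_span n m (F ` {0..T-e}) = mat_span n m (G ` {e..T})"
    and eT: "e \<le> T"
  shows "(\<forall>r\<in>{e..T}. \<exists>a<n. \<exists>b<m. G r $$ (a,b) \<noteq> 0) \<and> inj_on G {e..T}"
proof -
  have spF: "\<forall>i\<in>{0..T-e}. F i \<in> mat_span n m (G ` {e..T})"
  proof
    fix i assume i: "i \<in> {0..T-e}"
    have "F i \<in> mat_span n m (F ` {0..T-e})" using i Fc by (intro mat_span_base) auto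
    then show "F i \<in> mat_span n m (G ` {e..T})" using sp by simp
  qed
  have cd: "card {e..T} \<le> card {0..T-e}" using eT by simp
  have nz: "\<forall>r\<in>{e..T}. \<exists>a<n. \<exists>b<m. G r $$ (a,b) \<noteq> 0"
  proof (rule ballI, rule ccontr)
    fix r assume r: "r \<in> {e..T}" and z: "\<not> (\<exists>a<n. \<exists>b<m. G r $$ (a,b) \<noteq> 0)"
    then have "vc n m (G r) = 0" using vc_zero by blast
    then have "vc n m (G r) \<in> insert 0 (vc n m ` G ` ({e..T} - {r}))" by simp
    then show False using dim_lemma[OF _ _ ind spF cd r] by simp
  qed
  have "inj_on G {e..T}"
  proof (rule inj_onI, rule ccontr)
    fix r r' assume r: "r \<in> {e..T}" "r' \<in> {e..T}" "G r = G r'" "r \<noteq> r'"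
    then have "vc n m (G r) \<in> vc n m ` G ` ({e..T} - {r})" by auto
    then have "vc n m (G r) \<in> insert 0 (vc n m ` G ` ({e..T} - {r}))" by simp
    then show False using dim_lemma[OF _ _ ind spF cd r(1)] by simp
  qed
  with nz show ?thesis by blast
qed

theorem lemma10p1:
  fixes x :: "nat \<Rightarrow> nat" and t :: "nat \<Rightarrow> nat \<Rightarrow> nat"
    and A :: "nat \<Rightarrow> nat \<Rightarrow> nat \<Rightarrow> real mat" and tt :: nat
  assumes "coherent_config 2 x t A"
    and "fibre_symmetric 2 t A"
    and "admits_E 2 x t A"
    and "tt > 0"
    and "has_type2 t (tt + 1) tt (tt + 1)"
  shows "bipartite_cc (x 1) (x 2) tt tt tt (A 1 1) (A 2 2) (A 1 2)
         \<and> cc_set 2 x t A = bip_set (x 1) (x 2) tt tt tt (A 1 1) (A 2 2) (A 1 2)"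
proof -
  have two: "{1..2::nat} = {1,2}" by auto
  note cc = assms(1)[unfolded coherent_config_def two]
  have c2: "\<forall>i\<in>{1,2}. \<forall>j\<in>{1,2}. t i j > 0" using cc[THEN conjunct2, THEN conjunct1] .
  have c3: "\<forall>i\<in>{1,2}. \<forall>j\<in>{1,2}. \<forall>r\<in>{eps i j..t i j}.
         A i j r \<in> carrier_mat (x i) (x j) \<and> zero_one_mat (A i j r)"
    using cc[THEN conjunct2, THEN conjunct2, THEN conjunct1] .
  have c4: "\<forall>i\<in>{1,2}. A i i 0 = 1\<^sub>m (x i)"
    using cc[THEN conjunct2, THEN conjunct2, THEN conjunct2, THEN conjunct1] .
  have c5: "\<forall>i\<in>{1,2}. \<forall>j\<in>{1,2}. \<forall>a < x i. \<forall>b < x j. (\<Sum>r\<in>{eps i j..t i j}. A i j r $$ (a,b)) = 1"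
    using cc[THEN conjunct2, THEN conjunct2, THEN conjunct2, THEN conjunct2, THEN conjunct1] .
  have c6: "\<forall>M\<in>cc_set 2 x t A. transpose_mat M \<in> cc_set 2 x t A"
    using cc[THEN conjunct2, THEN conjunct2, THEN conjunct2, THEN conjunct2, THEN conjunct2, THEN conjunct1] .
  have c7: "\<forall>i\<in>{1,2}. \<forall>j\<in>{1,2}. \<forall>h\<in>{1,2}. \<forall>r\<in>{eps i j..t i j}. \<forall>s\<in>{eps j h..t j h}.
         hat_mat 2 x i j (A i j r) * hat_mat 2 x j h (A j h s)
           \<in> mat_span (fib_off x (2+1)) (fib_off x (2+1)) (cc_set 2 x t A)"
    using cc[THEN conjunct2, THEN conjunct2, THEN conjunct2, THEN conjunct2, THEN conjunct2, THEN conjunct2] .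
  have T: "t 1 1 = tt" "t 1 2 = tt" "t 2 1 = tt" "t 2 2 = tt"
    using assms(5) unfolding has_type2_def by auto
  have ep: "eps 1 1 = 0" "eps 2 2 = 0" "eps 1 2 = 1" "eps 2 1 = 1" by (simp_all add: eps_def)
  obtain E :: "nat \<Rightarrow> nat \<Rightarrow> nat \<Rightarrow> real mat" where
    E2: "\<forall>i\<in>{1,2}. \<forall>j\<in>{1,2}.
        (\<forall>r\<in>{0..t i j - eps i j}. E i j r \<in> carrier_mat (x i) (x j)) \<and>
        lin_indep_family (x i) (x j) {0..t i j - eps i j} (E i j) \<and>
        mat_span (x i) (x j) (E i j ` {0..t i j - eps i j})
          = mat_span (x i) (x j) (A i j ` {eps i j..t i j})"
    and E3: "\<forall>i\<in>{1,2}. \<forall>j\<in>{1,2}. \<forall>r\<in>{0..t i j - eps i j}. transpose_mat (E i j r) = E j i r"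
    and E4: "\<forall>i\<in>{1,2}. \<forall>j\<in>{1,2}. \<forall>h\<in>{1,2}.
        \<forall>r\<in>{0..t i j - eps i j}. \<forall>s\<in>{0..t j h - eps j h}.
          E i j r * E j h s = (if r = s then E i h r else 0\<^sub>m (x i) (x h))"
    using assms(3) unfolding admits_E_def two by blast

  have AC: "A i j r \<in> carrier_mat (x i) (x j)" "zero_one_mat (A i j r)"
    if "i \<in> {1,2}" "j \<in> {1,2}" "r \<in> {eps i j..t i j}" for i j r
    using c3 that by blast+
  have EC: "(\<forall>r\<in>{0..t i j - eps i j}. E i j r \<in> carrier_mat (x i) (x j))"
     "lin_indep_family (x i) (x j) {0..t i j - eps i j} (E i j)"
     "mat_span (x i) (x j) (E i j ` {0..t i j - eps i j}) = mat_span (x i) (x j) (A i j ` {eps i j..t i j})"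
    if "i \<in> {1,2}" "j \<in> {1,2}" for i j
    using E2 that by blast+
  have BD: "(\<forall>r\<in>{eps i j..t i j}. \<exists>a<x i. \<exists>b<x j. A i j r $$ (a,b) \<noteq> 0) \<and> inj_on (A i j) {eps i j..t i j}"
    if ij: "i \<in> {1,2}" "j \<in> {1,2}" for i j
  proof (rule block_dim[OF EC(2)[OF ij] EC(1)[OF ij] EC(3)[OF ij]])
    show "eps i j \<le> t i j" using c2 ij by (auto simp: eps_def)
  qed
  have BDnz: "\<exists>a<x i. \<exists>b<x j. A i j r $$ (a,b) \<noteq> 0"
    if ij: "i \<in> {1,2}" "j \<in> {1,2}" "r \<in> {eps i j..t i j}" for i j r
    using BD[OF ij(1,2)] ij(3) by blast
  define P where "P = Sigma {1,2::nat} (\<lambda>i. Sigma {1,2::nat} (\<lambda>j. {eps i j..t i j}))"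
  define H where "H = (\<lambda>(i,j,r). hat_mat 2 x i j (A i j r))"
  have finP: "finite P" unfolding P_def by (intro finite_SigmaI) simp_all
  have ccH: "cc_set 2 x t A = H ` P"
  proof
    show "cc_set 2 x t A \<subseteq> H ` P"
    proof
      fix M assume "M \<in> cc_set 2 x t A"
      then obtain i j r where "M = hat_mat 2 x i j (A i j r)" "i \<in> {1,2}" "j \<in> {1,2}" "eps i j \<le> r" "r \<le> t i j"
        unfolding cc_set_def two by blast
      then show "M \<in> H ` P" unfolding H_def P_def by (intro image_eqI[where x="(i,j,r)"]) auto
    qed
    show "H ` P \<subseteq> cc_set 2 x t A"
    proof
      fix M assume "M \<in> H ` P"
      then obtain i j r where "M = hat_mat 2 x i j (A i j r)" "i \<in> {1,2}" "j \<in> {1,2}" "eps i j \<le> r" "r \<le> t i j"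
        unfolding H_def P_def by auto
      then show "M \<in> cc_set 2 x t A" unfolding cc_set_def two by blast
    qed
  qed
  have injH: "inj_on H P"
  proof (rule inj_onI)
    fix p q assume p: "p \<in> P" and q: "q \<in> P" and e: "H p = H q"
    obtain i j r where pi: "p = (i,j,r)" by (cases p) auto
    obtain i' j' r' where qi: "q = (i',j',r')" by (cases q) auto
    have ij: "i \<in> {1,2}" "j \<in> {1,2}" "r \<in> {eps i j..t i j}" using p pi P_def by auto
    have ij': "i' \<in> {1,2}" "j' \<in> {1,2}" "r' \<in> {eps i' j'..t i' j'}" using q qi P_def by auto
    have "i = i' \<and> j = j' \<and> A i j r = A i' j' r'"
      by (rule hat_eq[OF ij(1,2) ij'(1,2) AC(1)[OF ij] AC(1)[OF ij']])
        (use BD[OF ij(1,2)] ij(3) e pi qi H_def in auto)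
    then show "p = q" using BD[OF ij(1,2)] ij(3) ij'(3) pi qi by (auto dest: inj_onD)
  qed
  have Hin: "hat_mat 2 x i j (A i j r) \<in> H ` P" if "i \<in> {1,2}" "j \<in> {1,2}" "r \<in> {eps i j..t i j}" for i j r
  proof -
    have "(i,j,r) \<in> P" using that unfolding P_def by auto
    then show ?thesis unfolding H_def by force
  qed
  have A21set: "A 2 1 ` {1..tt} = (\<lambda>h. transpose_mat (A 1 2 h)) ` {1..tt}"
  proof
    show "(\<lambda>h. transpose_mat (A 1 2 h)) ` {1..tt} \<subseteq> A 2 1 ` {1..tt}"
    proof
      fix M assume "M \<in> (\<lambda>h. transpose_mat (A 1 2 h)) ` {1..tt}"
      then obtain h where h: "h \<in> {1..tt}" "M = transpose_mat (A 1 2 h)" by auto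
      have hr: "h \<in> {eps 1 2..t 1 2}" using h T ep by simp
      have Ac: "A 1 2 h \<in> carrier_mat (x 1) (x 2)" using AC(1)[of 1 2 h] hr by simp
      have "transpose_mat (hat_mat 2 x 1 2 (A 1 2 h)) \<in> H ` P"
        using c6 Hin[of 1 2 h] hr ccH by auto
      then have "hat_mat 2 x 2 1 M \<in> H ` P" using hat_transpose[OF Ac] h by simp
      then obtain p where p: "p \<in> P" "H p = hat_mat 2 x 2 1 M" by auto
      obtain i j r where pi: "p = (i,j,r)" by (cases p) auto
      have ij: "i \<in> {1,2}" "j \<in> {1,2}" "r \<in> {eps i j..t i j}" using p pi P_def by auto
      have Mc: "M \<in> carrier_mat (x 2) (x 1)" using Ac h by simp
      have nz: "\<exists>a<x 2. \<exists>b<x 1. M $$ (a,b) \<noteq> 0"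
      proof -
        obtain a b where ab: "a < x 1" "b < x 2" "A 1 2 h $$ (a,b) \<noteq> 0" using BDnz[of 1 2 h] hr by auto
        then have "M $$ (b,a) \<noteq> 0" using Ac h by simp
        then show ?thesis using ab by blast
      qed
      have "2 = i \<and> 1 = j \<and> M = A i j r"
        by (rule hat_eq[where i=2 and j=1 and i'=i and j'=j and M=M and M'="A i j r" and x=x]) (use ij AC(1)[OF ij] Mc nz p pi H_def in auto)
      then show "M \<in> A 2 1 ` {1..tt}" using ij T ep by auto
    qed
    show "A 2 1 ` {1..tt} \<subseteq> (\<lambda>h. transpose_mat (A 1 2 h)) ` {1..tt}"
    proof
      fix M assume "M \<in> A 2 1 ` {1..tt}"
      then obtain h where h: "h \<in> {1..tt}" "M = A 2 1 h" by auto
      have hr: "h \<in> {eps 2 1..t 2 1}" using h T ep by simp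
      have Ac: "A 2 1 h \<in> carrier_mat (x 2) (x 1)" using AC(1)[of 2 1 h] hr by simp
      have "transpose_mat (hat_mat 2 x 2 1 (A 2 1 h)) \<in> H ` P"
        using c6 Hin[of 2 1 h] hr ccH by auto
      then have "hat_mat 2 x 1 2 (transpose_mat M) \<in> H ` P" using hat_transpose2[OF Ac] h by simp
      then obtain p where p: "p \<in> P" "H p = hat_mat 2 x 1 2 (transpose_mat M)" by auto
      obtain i j r where pi: "p = (i,j,r)" by (cases p) auto
      have ij: "i \<in> {1,2}" "j \<in> {1,2}" "r \<in> {eps i j..t i j}" using p pi P_def by auto
      have Mc: "transpose_mat M \<in> carrier_mat (x 1) (x 2)" using Ac h by simp
      have nz: "\<exists>a<x 1. \<exists>b<x 2. transpose_mat M $$ (a,b) \<noteq> 0"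
      proof -
        obtain a b where ab: "a < x 2" "b < x 1" "A 2 1 h $$ (a,b) \<noteq> 0" using BDnz[of 2 1 h] hr by auto
        then have "transpose_mat M $$ (b,a) \<noteq> 0" using Ac h by simp
        then show ?thesis using ab by blast
      qed
      have "1 = i \<and> 2 = j \<and> transpose_mat M = A i j r"
        by (rule hat_eq[where i=1 and j=2 and i'=i and j'=j and M="transpose_mat M" and M'="A i j r" and x=x]) (use ij AC(1)[OF ij] Mc nz p pi H_def in auto)
      then have e: "transpose_mat M = A 1 2 r" "r \<in> {1..tt}" using ij T ep by auto
      then have "M = transpose_mat (A 1 2 r)" by (metis transpose_transpose)
      with e(2) show "M \<in> (\<lambda>h. transpose_mat (A 1 2 h)) ` {1..tt}" by auto
    qed
  qed

  have A11c: "A 1 1 r \<in> carrier_mat (x 1) (x 1)" "zero_one_mat (A 1 1 r)" if "r \<le> tt" for r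
    using AC[of 1 1 r] that T ep by auto
  have A22c: "A 2 2 r \<in> carrier_mat (x 2) (x 2)" "zero_one_mat (A 2 2 r)" if "r \<le> tt" for r
    using AC[of 2 2 r] that T ep by auto
  have A12c: "A 1 2 r \<in> carrier_mat (x 1) (x 2)" "zero_one_mat (A 1 2 r)" if "r \<in> {1..tt}" for r
    using AC[of 1 2 r] that T ep by auto
  have A21c: "A 2 1 r \<in> carrier_mat (x 2) (x 1)" if "r \<in> {1..tt}" for r
    using AC[of 2 1 r] that T ep by auto
  let ?B = "bip_set (x 1) (x 2) tt tt tt (A 1 1) (A 2 2) (A 1 2)"
  have bipH: "?B = H ` P"
  proof
    show "?B \<subseteq> H ` P"
    proof
      fix M assume "M \<in> ?B"
      then consider
          (X) i where "i \<le> tt" "M = four_block_mat (A 1 1 i) (0\<^sub>m (x 1) (x 2)) (0\<^sub>m (x 2) (x 1)) (0\<^sub>m (x 2) (x 2))"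
        | (Y) i where "i \<le> tt" "M = four_block_mat (0\<^sub>m (x 1) (x 1)) (0\<^sub>m (x 1) (x 2)) (0\<^sub>m (x 2) (x 1)) (A 2 2 i)"
        | (N) i where "i \<in> {1..tt}" "M = four_block_mat (0\<^sub>m (x 1) (x 1)) (A 1 2 i) (0\<^sub>m (x 2) (x 1)) (0\<^sub>m (x 2) (x 2))"
        | (NT) i where "i \<in> {1..tt}" "M = four_block_mat (0\<^sub>m (x 1) (x 1)) (0\<^sub>m (x 1) (x 2)) (transpose_mat (A 1 2 i)) (0\<^sub>m (x 2) (x 2))"
        unfolding bip_set_def by blast
      then show "M \<in> H ` P"
      proof cases
        case (X i)
        then have "M = hat_mat 2 x 1 1 (A 1 1 i)" using hat_11[where x=x, OF A11c(1)[OF X(1)]] by simp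
        then show ?thesis using Hin[of 1 1 i] X T ep by simp
      next
        case (Y i)
        then have "M = hat_mat 2 x 2 2 (A 2 2 i)" using hat_22[where x=x, OF A22c(1)[OF Y(1)]] by simp
        then show ?thesis using Hin[of 2 2 i] Y T ep by simp
      next
        case (N i)
        then have "M = hat_mat 2 x 1 2 (A 1 2 i)" using hat_12[where x=x, OF A12c(1)[OF N(1)]] by simp
        then show ?thesis using Hin[of 1 2 i] N T ep by simp
      next
        case (NT i)
        have tc: "transpose_mat (A 1 2 i) \<in> carrier_mat (x 2) (x 1)" using A12c(1)[OF NT(1)] by simp
        have "transpose_mat (A 1 2 i) \<in> A 2 1 ` {1..tt}" using A21set NT(1) by auto
        then obtain r where r: "r \<in> {1..tt}" "transpose_mat (A 1 2 i) = A 2 1 r" by auto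
        have "M = hat_mat 2 x 2 1 (transpose_mat (A 1 2 i))" using hat_21[where x=x, OF tc] NT by simp
        then show ?thesis using Hin[of 2 1 r] r T ep by simp
      qed
    qed
    show "H ` P \<subseteq> ?B"
    proof
      fix M assume "M \<in> H ` P"
      then obtain p where p: "p \<in> P" "M = H p" by auto
      obtain i j r where pi: "p = (i,j,r)" by (cases p) auto
      have ij: "i \<in> {1,2}" "j \<in> {1,2}" "r \<in> {eps i j..t i j}" using p pi P_def by auto
      have M: "M = hat_mat 2 x i j (A i j r)" using p pi H_def by simp
      from ij(1,2) consider "i = 1" "j = 1" | "i = 1" "j = 2" | "i = 2" "j = 1" | "i = 2" "j = 2" by blast
      then show "M \<in> ?B"
      proof cases
        case 1
        then have r: "r \<le> tt" using ij T ep by simp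
        then have "M = four_block_mat (A 1 1 r) (0\<^sub>m (x 1) (x 2)) (0\<^sub>m (x 2) (x 1)) (0\<^sub>m (x 2) (x 2))"
          using hat_11[where x=x, OF A11c(1)[OF r]] M 1 by simp
        then show ?thesis unfolding bip_set_def using r by blast
      next
        case 2
        then have r: "r \<in> {1..tt}" using ij T ep by simp
        then have "M = four_block_mat (0\<^sub>m (x 1) (x 1)) (A 1 2 r) (0\<^sub>m (x 2) (x 1)) (0\<^sub>m (x 2) (x 2))"
          using hat_12[where x=x, OF A12c(1)[OF r]] M 2 by simp
        then show ?thesis unfolding bip_set_def using r by blast
      next
        case 3
        then have r: "r \<in> {1..tt}" using ij T ep by simp
        then have "A 2 1 r \<in> (\<lambda>h. transpose_mat (A 1 2 h)) ` {1..tt}" using A21set by blast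
        then obtain h where h: "h \<in> {1..tt}" "A 2 1 r = transpose_mat (A 1 2 h)" by auto
        have tc: "transpose_mat (A 1 2 h) \<in> carrier_mat (x 2) (x 1)" using A12c(1)[OF h(1)] by simp
        have "M = four_block_mat (0\<^sub>m (x 1) (x 1)) (0\<^sub>m (x 1) (x 2)) (transpose_mat (A 1 2 h)) (0\<^sub>m (x 2) (x 2))"
          using hat_21[where x=x, OF tc] M 3 h by simp
        then show ?thesis unfolding bip_set_def using h(1) by blast
      next
        case 4
        then have r: "r \<le> tt" using ij T ep by simp
        then have "M = four_block_mat (0\<^sub>m (x 1) (x 1)) (0\<^sub>m (x 1) (x 2)) (0\<^sub>m (x 2) (x 1)) (A 2 2 r)"
          using hat_22[where x=x, OF A22c(1)[OF r]] M 4 by simp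
        then show ?thesis unfolding bip_set_def using r by blast
      qed
    qed
  qed
  have ccB: "cc_set 2 x t A = ?B" using ccH bipH by simp

  have C2: "\<forall>a < x 1 + x 2. \<forall>b < x 1 + x 2. (\<Sum>M\<in>?B. M $$ (a,b)) = 1"
  proof (intro allI impI)
    fix a b assume ab: "a < x 1 + x 2" "b < x 1 + x 2"
    define i0 where "i0 = (if a < x 1 then 1 else 2::nat)"
    define j0 where "j0 = (if b < x 1 then 1 else 2::nat)"
    have i0: "i0 \<in> {1,2}" "j0 \<in> {1,2}" unfolding i0_def j0_def by auto
    have ai: "a - lo x i0 < x i0"
    proof (cases "a < x 1")
      case True then have "i0 = 1" "lo x i0 = 0" by (simp_all add: i0_def lo_def)
      then show ?thesis using True by simp
    next
      case False then have "i0 = 2" "lo x i0 = x 1" by (simp_all add: i0_def lo_def)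
      then show ?thesis using False ab(1) by simp
    qed
    have bj: "b - lo x j0 < x j0"
    proof (cases "b < x 1")
      case True then have "j0 = 1" "lo x j0 = 0" by (simp_all add: j0_def lo_def)
      then show ?thesis using True by simp
    next
      case False then have "j0 = 2" "lo x j0 = x 1" by (simp_all add: j0_def lo_def)
      then show ?thesis using False ab(2) by simp
    qed
    have cnd: "((a < x 1 \<longleftrightarrow> i = 1) \<and> (b < x 1 \<longleftrightarrow> j = 1)) \<longleftrightarrow> (i = i0 \<and> j = j0)"
      if "i \<in> {1,2}" "j \<in> {1,2}" for i j
    proof -
      from that have "i = 1 \<or> i = 2" "j = 1 \<or> j = 2" by auto
      then show ?thesis unfolding i0_def j0_def by (elim disjE) simp_all
    qed
    define g where "g p = (if fst p = i0 \<and> fst (snd p) = j0 then A i0 j0 (snd (snd p)) $$ (a - lo x i0, b - lo x j0) else 0)" for p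
    have Hv: "H p $$ (a,b) = g p" if p: "p \<in> P" for p
    proof -
      obtain i j r where pi: "p = (i,j,r)" by (cases p) auto
      have ij: "i \<in> {1,2}" "j \<in> {1,2}" using p pi P_def by auto
      have "H p $$ (a,b) = (if (a < x 1 \<longleftrightarrow> i = 1) \<and> (b < x 1 \<longleftrightarrow> j = 1) then A i j r $$ (a - lo x i, b - lo x j) else 0)"
        using hat_idx[OF ij ab] pi H_def by simp
      also have "\<dots> = (if i = i0 \<and> j = j0 then A i j r $$ (a - lo x i, b - lo x j) else 0)"
        using cnd[OF ij] by simp
      also have "\<dots> = g p" unfolding g_def pi by auto
      finally show ?thesis .
    qed
    have "(\<Sum>M\<in>?B. M $$ (a,b)) = (\<Sum>M\<in>H ` P. M $$ (a,b))" using bipH by simp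
    also have "\<dots> = (\<Sum>p\<in>P. H p $$ (a,b))" by (simp add: sum.reindex[OF injH])
    also have "\<dots> = (\<Sum>p\<in>P. g p)" using Hv by (rule sum.cong[OF refl])
    also have "\<dots> = (\<Sum>p\<in>{p\<in>P. fst p = i0 \<and> fst (snd p) = j0}. A i0 j0 (snd (snd p)) $$ (a - lo x i0, b - lo x j0))"
      unfolding g_def using finP by (simp add: sum.inter_filter)
    also have "{p\<in>P. fst p = i0 \<and> fst (snd p) = j0} = (\<lambda>r. (i0,j0,r)) ` {eps i0 j0..t i0 j0}"
      using i0 unfolding P_def by auto
    also have "(\<Sum>p\<in>(\<lambda>r. (i0,j0,r)) ` {eps i0 j0..t i0 j0}. A i0 j0 (snd (snd p)) $$ (a - lo x i0, b - lo x j0))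
        = (\<Sum>r\<in>{eps i0 j0..t i0 j0}. A i0 j0 r $$ (a - lo x i0, b - lo x j0))"
      by (subst sum.reindex) (auto simp: inj_on_def)
    also have "\<dots> = 1" using c5 i0 ai bj by blast
    finally show "(\<Sum>M\<in>?B. M $$ (a,b)) = 1" .
  qed
  have C4: "\<forall>M1\<in>?B. \<forall>M2\<in>?B. M1 * M2 \<in> mat_span (x 1 + x 2) (x 1 + x 2) ?B"
  proof (intro ballI)
    fix M1 M2 assume "M1 \<in> ?B" "M2 \<in> ?B"
    then obtain p q where pq: "p \<in> P" "q \<in> P" "M1 = H p" "M2 = H q" using bipH by auto
    obtain i j r where pi: "p = (i,j,r)" by (cases p) auto
    obtain j' h s where qi: "q = (j',h,s)" by (cases q) auto
    have ij: "i \<in> {1,2}" "j \<in> {1,2}" "r \<in> {eps i j..t i j}" using pq pi P_def by auto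
    have ij': "j' \<in> {1,2}" "h \<in> {1,2}" "s \<in> {eps j' h..t j' h}" using pq qi P_def by auto
    have M12: "M1 * M2 = hat_mat 2 x i j (A i j r) * hat_mat 2 x j' h (A j' h s)"
      using pq pi qi H_def by simp
    show "M1 * M2 \<in> mat_span (x 1 + x 2) (x 1 + x 2) ?B"
    proof (cases "j = j'")
      case True
      have "hat_mat 2 x i j (A i j r) * hat_mat 2 x j h (A j h s)
           \<in> mat_span (fib_off x (2+1)) (fib_off x (2+1)) (cc_set 2 x t A)"
        using c7 ij ij' True by blast
      then show ?thesis using M12 True ccB by simp
    next
      case False
      have "M1 * M2 = 0\<^sub>m (x 1 + x 2) (x 1 + x 2)"
        using M12 hat_mult_zero[OF ij(1,2) ij'(1,2) False] by simp
      moreover have "(0\<^sub>m (x 1 + x 2) (x 1 + x 2) :: real mat) \<in> mat_span (x 1 + x 2) (x 1 + x 2) ?B"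
        by (rule mat_spanI[where c="\<lambda>_. 0"]) auto
      ultimately show ?thesis by simp
    qed
  qed
  have coreX: "(\<forall>i\<in>{1..tt}. \<forall>j\<in>{1..tt}. A 1 2 i * transpose_mat (A 1 2 j) = A 1 2 j * transpose_mat (A 1 2 i)) \<and>
    mat_span (x 1) (x 1) ({A 1 2 i * transpose_mat (A 1 2 j) | i j. i \<in> {1..tt} \<and> j \<in> {1..tt}} \<union> {1\<^sub>m (x 1)})
      = mat_span (x 1) (x 1) (A 1 1 ` {0..tt})"
  proof (rule core[where t=tt and N="A 1 2" and n="x 1" and m="x 2" and F="E 1 2" and G="E 1 1" and X="A 1 1"])
    show "0 < tt" by (rule assms(4))
    show "\<forall>h\<in>{1..tt}. A 1 2 h \<in> carrier_mat (x 1) (x 2)" using A12c by blast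
    show "\<forall>r\<in>{0..tt - 1}. E 1 2 r \<in> carrier_mat (x 1) (x 2)" using EC(1)[of 1 2] T ep by simp
    show "\<forall>r\<in>{0..tt}. E 1 1 r \<in> carrier_mat (x 1) (x 1)" using EC(1)[of 1 1] T ep by simp
    show "\<forall>r\<in>{0..tt}. A 1 1 r \<in> carrier_mat (x 1) (x 1)" using A11c by auto
    show "mat_span (x 1) (x 2) (E 1 2 ` {0..tt - 1}) = mat_span (x 1) (x 2) (A 1 2 ` {1..tt})"
      using EC(3)[of 1 2] T ep by simp
    show "\<forall>r\<in>{0..tt - 1}. \<forall>s\<in>{0..tt - 1}. E 1 2 r * transpose_mat (E 1 2 s) = (if r = s then E 1 1 r else 0\<^sub>m (x 1) (x 1))"
    proof (intro ballI)
      fix r s assume rs: "r \<in> {0..tt - 1}" "s \<in> {0..tt - 1}"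
      have "transpose_mat (E 1 2 s) = E 2 1 s" using E3 rs T ep by simp
      moreover have "E 1 2 r * E 2 1 s = (if r = s then E 1 1 r else 0\<^sub>m (x 1) (x 1))" using E4 rs T ep by simp
      ultimately show "E 1 2 r * transpose_mat (E 1 2 s) = (if r = s then E 1 1 r else 0\<^sub>m (x 1) (x 1))" by simp
    qed
    show "\<forall>r\<in>{0..tt}. \<forall>s\<in>{0..tt}. E 1 1 r * E 1 1 s = (if r = s then E 1 1 r else 0\<^sub>m (x 1) (x 1))"
      using E4 T ep by simp
    show "lin_indep_family (x 1) (x 1) {0..tt} (E 1 1)" using EC(2)[of 1 1] T ep by simp
    show "mat_span (x 1) (x 1) (E 1 1 ` {0..tt}) = mat_span (x 1) (x 1) (A 1 1 ` {0..tt})"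
      using EC(3)[of 1 1] T ep by simp
    show "A 1 1 0 = 1\<^sub>m (x 1)" using c4 by simp
  qed
  have coreY: "(\<forall>i\<in>{1..tt}. \<forall>j\<in>{1..tt}. transpose_mat (A 1 2 i) * transpose_mat (transpose_mat (A 1 2 j))
        = transpose_mat (A 1 2 j) * transpose_mat (transpose_mat (A 1 2 i))) \<and>
    mat_span (x 2) (x 2) ({transpose_mat (A 1 2 i) * transpose_mat (transpose_mat (A 1 2 j)) | i j. i \<in> {1..tt} \<and> j \<in> {1..tt}} \<union> {1\<^sub>m (x 2)})
      = mat_span (x 2) (x 2) (A 2 2 ` {0..tt})"
  proof (rule core[where t=tt and N="\<lambda>h. transpose_mat (A 1 2 h)" and n="x 2" and m="x 1" and F="E 2 1" and G="E 2 2" and X="A 2 2"])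
    show "0 < tt" by (rule assms(4))
    show "\<forall>h\<in>{1..tt}. transpose_mat (A 1 2 h) \<in> carrier_mat (x 2) (x 1)" using A12c by simp
    show "\<forall>r\<in>{0..tt - 1}. E 2 1 r \<in> carrier_mat (x 2) (x 1)" using EC(1)[of 2 1] T ep by simp
    show "\<forall>r\<in>{0..tt}. E 2 2 r \<in> carrier_mat (x 2) (x 2)" using EC(1)[of 2 2] T ep by simp
    show "\<forall>r\<in>{0..tt}. A 2 2 r \<in> carrier_mat (x 2) (x 2)" using A22c by auto
    show "mat_span (x 2) (x 1) (E 2 1 ` {0..tt - 1}) = mat_span (x 2) (x 1) ((\<lambda>h. transpose_mat (A 1 2 h)) ` {1..tt})"
      using EC(3)[of 2 1] T ep A21set by simp
    show "\<forall>r\<in>{0..tt - 1}. \<forall>s\<in>{0..tt - 1}. E 2 1 r * transpose_mat (E 2 1 s) = (if r = s then E 2 2 r else 0\<^sub>m (x 2) (x 2))"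
    proof (intro ballI)
      fix r s assume rs: "r \<in> {0..tt - 1}" "s \<in> {0..tt - 1}"
      have "transpose_mat (E 2 1 s) = E 1 2 s" using E3 rs T ep by simp
      moreover have "E 2 1 r * E 1 2 s = (if r = s then E 2 2 r else 0\<^sub>m (x 2) (x 2))" using E4 rs T ep by simp
      ultimately show "E 2 1 r * transpose_mat (E 2 1 s) = (if r = s then E 2 2 r else 0\<^sub>m (x 2) (x 2))" by simp
    qed
    show "\<forall>r\<in>{0..tt}. \<forall>s\<in>{0..tt}. E 2 2 r * E 2 2 s = (if r = s then E 2 2 r else 0\<^sub>m (x 2) (x 2))"
      using E4 T ep by simp
    show "lin_indep_family (x 2) (x 2) {0..tt} (E 2 2)" using EC(2)[of 2 2] T ep by simp
    show "mat_span (x 2) (x 2) (E 2 2 ` {0..tt}) = mat_span (x 2) (x 2) (A 2 2 ` {0..tt})"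
      using EC(3)[of 2 2] T ep by simp
    show "A 2 2 0 = 1\<^sub>m (x 2)" using c4 by simp
  qed
  have C3: "\<forall>M\<in>?B. transpose_mat M \<in> ?B" using c6 ccB by simp
  have C1: "A 1 1 0 = 1\<^sub>m (x 1)" "A 2 2 0 = 1\<^sub>m (x 2)" using c4 by simp_all
  have bcc: "bipartite_cc (x 1) (x 2) tt tt tt (A 1 1) (A 2 2) (A 1 2)"
    unfolding bipartite_cc_def Let_def
    using assms(4) A11c A22c A12c C1 C2 C3 C4 coreX coreY by simp
  show ?thesis using bcc ccB by simp
qed

end
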